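(* Let $J\in\mathbb N$ be fixed, and for $j=1,\dots,J$ let $U_j,\hat U_j$ be orthogonal projection matrices of the same rank $K_j$ (of a common dimension). For $0\le\alpha_N<1/(4\sqrt2+2)$ define maps on chains $V=(V_1,\dots,V_J)$ of projectors by $$[\hat{\mathcal G}_{\alpha_N}(V)]_1=\Pi_{K_1}(\hat U_1+\alpha_NV_2),\quad [\hat{\mathcal G}_{\alpha_N}(V)]_j=\Pi_{K_j}(\alpha_NV_{j-1}+\hat U_j+\alpha_NV_{j+1})\ (2\le j\le J-1),\quad [\hat{\mathcal G}_{\alpha_N}(V)]_J=\Pi_{K_J}(\alpha_NV_{J-1}+\hat U_J),$$ and $\mathcal G_{\alpha_N}$ analogously with $\hat U_j$ replaced by $U_j$. Let $(\bar U_j)_j$ be the fixed point of $\hat{\mathcal G}_{\alpha_N}$ and $(U_j^{(\alpha_N)})_j$ the fixed point of $\mathcal G_{\alpha_N}$. Then there is a constant $C>0$, independent of $N$, such that $$\sum_{j=1}^J\|\bar U_j-U_j\|_F\le C\Bigl(\sum_{j=1}^J\|\hat U_j-U_j\|_F+\alpha_N\Bigr).$$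
   Context: $\Pi_K(M)=\sum_{k=1}^K\nu_k\nu_k'$ denotes the orthogonal projector onto the span of the top-$K$ eigenvectors $\nu_1,\dots,\nu_K$ of a symmetric matrix $M$. $\alpha_N$ is a smoothing parameter (possibly depending on a sample size $N$). *)

theory Defs
  imports "HOL-Analysis.Analysis"
begin

definition is_orth_proj :: "real^'n^'n \<Rightarrow> bool" where
  "is_orth_proj P \<longleftrightarrow> transpose P = P \<and> P ** P = P"

definition frob :: "real^'n^'n \<Rightarrow> real" where
  "frob A = sqrt (\<Sum>i\<in>UNIV. \<Sum>j\<in>UNIV. (A $ i $ j)\<^sup>2)"

definition outer :: "real^'n \<Rightarrow> real^'n \<Rightarrow> real^'n^'n" where
  "outer u v = (\<chi> i j. u $ i * v $ j)"

text \<open>top_eig_proj K M P: P = Pi_K(M) = sum over k < K of nu_k nu_k', for some orthonormal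
  eigenbasis nu_0, ..., nu_(n-1) of M ordered by non-increasing eigenvalues
  (a relation, since the eigenbasis is not unique in case of ties).\<close>
definition top_eig_proj :: "nat \<Rightarrow> real^'n^'n \<Rightarrow> real^'n^'n \<Rightarrow> bool" where
  "top_eig_proj K M P \<longleftrightarrow>
     (\<exists>(\<nu>::nat \<Rightarrow> real^'n) (ev::nat \<Rightarrow> real).
        (\<forall>k<CARD('n). M *v \<nu> k = ev k *\<^sub>R \<nu> k) \<and>
        (\<forall>k<CARD('n). \<forall>l<CARD('n). \<nu> k \<bullet> \<nu> l = (if k = l then 1 else 0)) \<and>
        (\<forall>k l. k \<le> l \<longrightarrow> l < CARD('n) \<longrightarrow> ev l \<le> ev k) \<and>
        P = (\<Sum>k<K. outer (\<nu> k) (\<nu> k)))"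

text \<open>Argument of Pi_{K_j} in the j-th component of G_alpha(V) built from data W (j = 1..J);
  neighbour terms outside 1..J are absent.\<close>
definition G_arg :: "nat \<Rightarrow> real \<Rightarrow> (nat \<Rightarrow> real^'n^'n) \<Rightarrow> (nat \<Rightarrow> real^'n^'n) \<Rightarrow> nat \<Rightarrow> real^'n^'n" where
  "G_arg J \<alpha> W V j =
     (if 1 < j then \<alpha> *\<^sub>R V (j - 1) else 0) + W j + (if j < J then \<alpha> *\<^sub>R V (j + 1) else 0)"

definition is_fixed_point :: "nat \<Rightarrow> (nat \<Rightarrow> nat) \<Rightarrow> real \<Rightarrow> (nat \<Rightarrow> real^'n^'n) \<Rightarrow> (nat \<Rightarrow> real^'n^'n) \<Rightarrow> bool" where
  "is_fixed_point J K \<alpha> W V \<longleftrightarrow> (\<forall>j\<in>{1..J}. top_eig_proj (K j) (G_arg J \<alpha> W V j) (V j))"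

end

theory Submission imports Defs begin


lemma frob_norm: "frob A = norm A"
  by (simp add: frob_def norm_eq_sqrt_inner inner_vec_def power2_eq_square)

lemma common_vec:
  fixes A B :: "(real^'n) set"
  assumes "subspace A" "subspace B" "dim A + dim B > CARD('n)"
  shows "\<exists>x\<in>A \<inter> B. x \<noteq> 0"
proof -
  have "dim {x + y |x y. x \<in> A \<and> y \<in> B} \<le> CARD('n)" by (rule dim_subset_UNIV_cart)
  with dim_sums_Int[OF assms(1,2)] assms(3) have "dim (A \<inter> B) > 0" by linarith
  then have "\<not> (A \<inter> B \<subseteq> {0})" using dim_eq_0 by (metis not_gr_zero)
  then show ?thesis by auto
qed

lemma mv_row: "(M *v x) $ i = (M $ i) \<bullet> x"
  by (simp add: matrix_vector_mult_def inner_vec_def mult.commute)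

lemma outer_mv: "outer u u *v x = (u \<bullet> x) *\<^sub>R u"
  by (simp add: vec_eq_iff outer_def matrix_vector_mult_def inner_vec_def sum_distrib_left mult_ac)

lemma sum_mv: "(\<Sum>k\<in>S. A k) *v x = (\<Sum>k\<in>S. A k *v x)"
proof (cases "finite S")
  case True then show ?thesis
    by (induction S rule: finite_induct) (auto simp: matrix_vector_mult_add_rdistrib)
qed simp



definition orthn :: "(nat \<Rightarrow> real^'n) \<Rightarrow> bool" where
  "orthn \<nu> \<longleftrightarrow> (\<forall>k<CARD('n). \<forall>l<CARD('n). \<nu> k \<bullet> \<nu> l = (if k = l then 1 else 0))"

lemma norm2_vec: "(norm (v::real^'n))\<^sup>2 = (\<Sum>i\<in>UNIV. (v$i)\<^sup>2)"
  by (simp add: norm_vec_def L2_set_def sum_nonneg)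

lemma mv_sum_scale: "(M::real^'n^'m) *v (\<Sum>k\<in>S. c k *\<^sub>R v k) = (\<Sum>k\<in>S. c k *\<^sub>R (M *v v k))"
proof (cases "finite S")
  case True then show ?thesis
    by (induction S rule: finite_induct) (auto simp: matrix_vector_right_distrib matrix_vector_mult_scaleR)
qed simp

lemma orthn_span:
  fixes \<nu> :: "nat \<Rightarrow> real^'n"
  assumes "orthn \<nu>"
  shows "span (\<nu> ` {..<CARD('n)}) = UNIV"
proof -
  let ?B = "\<nu> ` {..<CARD('n)}"
  have inj: "inj_on \<nu> {..<CARD('n)}"
  proof (rule inj_onI)
    fix k l assume "k \<in> {..<CARD('n)}" "l \<in> {..<CARD('n)}" "\<nu> k = \<nu> l"
    then show "k = l" using assms unfolding orthn_def
      by (metis lessThan_iff zero_neq_one)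
  qed
  have po: "pairwise orthogonal ?B"
    using assms unfolding orthn_def pairwise_def orthogonal_def by auto
  have "0 \<notin> ?B"
    using assms unfolding orthn_def by fastforce
  then have ind: "independent ?B" using pairwise_orthogonal_independent po by blast
  have card: "card ?B = dim (UNIV :: (real^'n) set)"
    using card_image[OF inj] by simp
  have "UNIV \<subseteq> span ?B"
    using card_eq_dim[of ?B UNIV] ind card by simp
  then show ?thesis by auto
qed

lemma orthn_expand:
  fixes \<nu> :: "nat \<Rightarrow> real^'n"
  assumes "orthn \<nu>"
  shows "x = (\<Sum>k<CARD('n). (x \<bullet> \<nu> k) *\<^sub>R \<nu> k)"
proof -
  define z where "z = x - (\<Sum>k<CARD('n). (x \<bullet> \<nu> k) *\<^sub>R \<nu> k)"
  have "orthogonal z y" if "y \<in> \<nu> ` {..<CARD('n)}" for y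
  proof -
    obtain l where l: "l < CARD('n)" "y = \<nu> l" using \<open>y \<in> _\<close> by auto
    have "z \<bullet> \<nu> l = x \<bullet> \<nu> l - (\<Sum>k<CARD('n). (x \<bullet> \<nu> k) * (\<nu> k \<bullet> \<nu> l))"
      by (simp add: z_def inner_diff_left inner_sum_left)
    also have "(\<Sum>k<CARD('n). (x \<bullet> \<nu> k) * (\<nu> k \<bullet> \<nu> l)) = (\<Sum>k<CARD('n). if k = l then x \<bullet> \<nu> l else 0)"
      by (rule sum.cong) (use assms l in \<open>auto simp: orthn_def\<close>)
    also have "\<dots> = x \<bullet> \<nu> l" using l by simp
    finally show ?thesis using l by (simp add: orthogonal_def)
  qed
  then have "orthogonal z z"
    using orthogonal_to_span[of z "\<nu> ` {..<CARD('n)}" z] orthn_span[OF assms] by auto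
  then have "z = 0" by (simp add: orthogonal_def)
  then show ?thesis by (simp add: z_def)
qed

lemma orthn_parseval:
  fixes \<nu> :: "nat \<Rightarrow> real^'n"
  assumes "orthn \<nu>"
  shows "x \<bullet> y = (\<Sum>k<CARD('n). (x \<bullet> \<nu> k) * (y \<bullet> \<nu> k))"
proof -
  have "x \<bullet> y = (\<Sum>k<CARD('n). (x \<bullet> \<nu> k) *\<^sub>R \<nu> k) \<bullet> y"
    using orthn_expand[OF assms, of x] by simp
  also have "\<dots> = (\<Sum>k<CARD('n). (x \<bullet> \<nu> k) * (y \<bullet> \<nu> k))"
    unfolding inner_sum_left inner_scaleR_left by (simp add: inner_commute)
  finally show ?thesis .
qed

lemma orthn_norm2:
  fixes \<nu> :: "nat \<Rightarrow> real^'n"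
  assumes "orthn \<nu>"
  shows "(norm x)\<^sup>2 = (\<Sum>k<CARD('n). (x \<bullet> \<nu> k)\<^sup>2)"
proof -
  have "(norm x)\<^sup>2 = x \<bullet> x" by (rule power2_norm_eq_inner)
  then show ?thesis using orthn_parseval[OF assms, of x x] by (simp only: power2_eq_square)
qed

lemma orthn_frob:
  fixes \<nu> :: "nat \<Rightarrow> real^'n" and A :: "real^'n^'n"
  assumes "orthn \<nu>"
  shows "(norm A)\<^sup>2 = (\<Sum>k<CARD('n). (norm (A *v \<nu> k))\<^sup>2)"
proof -
  have "(norm A)\<^sup>2 = (\<Sum>i\<in>UNIV. (A $ i) \<bullet> (A $ i))"
    by (simp add: power2_norm_eq_inner inner_vec_def)
  also have "\<dots> = (\<Sum>i\<in>UNIV. \<Sum>k<CARD('n). ((A $ i) \<bullet> \<nu> k)\<^sup>2)"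
    using orthn_norm2[OF assms] by (simp add: power2_norm_eq_inner)
  also have "\<dots> = (\<Sum>k<CARD('n). \<Sum>i\<in>UNIV. ((A *v \<nu> k) $ i)\<^sup>2)"
    by (subst sum.swap) (simp add: mv_row)
  also have "\<dots> = (\<Sum>k<CARD('n). (norm (A *v \<nu> k))\<^sup>2)"
    by (simp only: norm2_vec)
  finally show ?thesis .
qed

lemma quad_form:
  fixes \<nu> :: "nat \<Rightarrow> real^'n" and M :: "real^'n^'n"
  assumes "orthn \<nu>" and ev: "\<forall>k<CARD('n). M *v \<nu> k = ev k *\<^sub>R \<nu> k"
  shows "x \<bullet> (M *v x) = (\<Sum>k<CARD('n). ev k * (x \<bullet> \<nu> k)\<^sup>2)"
proof -
  have "M *v x = M *v (\<Sum>k<CARD('n). (x \<bullet> \<nu> k) *\<^sub>R \<nu> k)"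
    using orthn_expand[OF assms(1), of x] by simp
  also have "\<dots> = (\<Sum>k<CARD('n). (x \<bullet> \<nu> k) *\<^sub>R (M *v \<nu> k))"
    by (rule mv_sum_scale)
  also have "\<dots> = (\<Sum>k<CARD('n). (x \<bullet> \<nu> k) *\<^sub>R ev k *\<^sub>R \<nu> k)"
    using ev by simp
  finally have "x \<bullet> (M *v x) = (\<Sum>k<CARD('n). (x \<bullet> \<nu> k) * ev k * (x \<bullet> \<nu> k))"
    by (simp add: inner_sum_right)
  then show ?thesis by (simp add: power2_eq_square mult_ac)
qed



lemma norm_mv_le: "norm ((E::real^'n^'n) *v x) \<le> norm E * norm x"
proof -
  have "(norm (E *v x))\<^sup>2 = (\<Sum>i\<in>UNIV. ((E $ i) \<bullet> x)\<^sup>2)"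
    by (simp add: norm2_vec mv_row)
  also have "\<dots> \<le> (\<Sum>i\<in>UNIV. (norm (E $ i))\<^sup>2 * (norm x)\<^sup>2)"
  proof (rule sum_mono)
    fix i
    have "\<bar>(E $ i) \<bullet> x\<bar> \<le> norm (E $ i) * norm x" by (rule Cauchy_Schwarz_ineq2)
    then have "\<bar>(E $ i) \<bullet> x\<bar>\<^sup>2 \<le> (norm (E $ i) * norm x)\<^sup>2"
      by (rule power_mono) simp
    then show "((E $ i) \<bullet> x)\<^sup>2 \<le> (norm (E $ i))\<^sup>2 * (norm x)\<^sup>2"
      by (simp add: power_mult_distrib)
  qed
  also have "\<dots> = (norm E * norm x)\<^sup>2"
    by (simp add: norm_vec_def L2_set_def sum_nonneg power_mult_distrib sum_distrib_right)
  finally show ?thesis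
    by (rule power2_le_imp_le) simp
qed

lemma quad_E: "\<bar>x \<bullet> ((E::real^'n^'n) *v x)\<bar> \<le> norm E * (norm x)\<^sup>2"
proof -
  have "\<bar>x \<bullet> (E *v x)\<bar> \<le> norm x * norm (E *v x)" by (rule Cauchy_Schwarz_ineq2)
  also have "\<dots> \<le> norm x * (norm E * norm x)"
    by (rule mult_left_mono[OF norm_mv_le]) simp
  finally show ?thesis by (simp add: power2_eq_square mult_ac)
qed

lemma proj_entry:
  assumes "is_orth_proj U"
  shows "U $ i $ j = U $ j $ i"
proof -
  have "transpose U = U" using assms by (simp add: is_orth_proj_def)
  then have "(transpose U) $ i $ j = U $ i $ j" by simp
  then show ?thesis by (simp add: transpose_def)
qed

lemma proj_UU:
  assumes "is_orth_proj U"
  shows "U *v (U *v x) = U *v x"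
  using assms by (simp add: is_orth_proj_def matrix_vector_mul_assoc)

lemma proj_sym:
  assumes "is_orth_proj (U::real^'n^'n)"
  shows "(U *v x) \<bullet> y = x \<bullet> (U *v y)"
proof -
  have "transpose U = U" using assms by (simp add: is_orth_proj_def)
  have "(U *v x) \<bullet> y = (x v* transpose U) \<bullet> y" by simp
  also have "\<dots> = (x v* U) \<bullet> y" using \<open>transpose U = U\<close> by simp
  also have "\<dots> = x \<bullet> (U *v y)" by (rule dot_lmul_matrix)
  finally show ?thesis .
qed

lemma proj_pyth:
  assumes "is_orth_proj (U::real^'n^'n)"
  shows "(norm x)\<^sup>2 = (norm (U *v x))\<^sup>2 + (norm (x - U *v x))\<^sup>2"
proof -
  have o: "(U *v x) \<bullet> (x - U *v x) = 0"
    using proj_sym[OF assms, of x "U *v x"] proj_UU[OF assms, of x]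
    by (simp add: inner_diff_right inner_commute)
  have "x = U *v x + (x - U *v x)" by simp
  then have "(norm x)\<^sup>2 = (norm (U *v x + (x - U *v x)))\<^sup>2" by simp
  also have "\<dots> = (norm (U *v x))\<^sup>2 + (norm (x - U *v x))\<^sup>2"
    using norm_add_Pythagorean[of "U *v x" "x - U *v x"] o by (simp add: orthogonal_def)
  finally show ?thesis .
qed

lemma proj_le1: "is_orth_proj (U::real^'n^'n) \<Longrightarrow> norm (U *v x) \<le> norm x"
  using proj_pyth[of U x] by (metis le_add_same_cancel1 norm_ge_zero power2_le_imp_le zero_le_power2)

lemma proj_le2: "is_orth_proj (U::real^'n^'n) \<Longrightarrow> norm (x - U *v x) \<le> norm x"
  using proj_pyth[of U x] by (metis le_add_same_cancel2 norm_ge_zero power2_le_imp_le zero_le_power2)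



lemma orthn_indep:
  fixes \<nu> :: "nat \<Rightarrow> real^'n"
  assumes "orthn \<nu>" "L \<subseteq> {..<CARD('n)}"
  shows "independent (\<nu> ` L) \<and> inj_on \<nu> L"
proof -
  have inj: "inj_on \<nu> L"
  proof (rule inj_onI)
    fix k l assume "k \<in> L" "l \<in> L" "\<nu> k = \<nu> l"
    then show "k = l" using assms unfolding orthn_def
      by (metis lessThan_iff subsetD zero_neq_one)
  qed
  have po: "pairwise orthogonal (\<nu> ` L)"
    using assms unfolding orthn_def pairwise_def orthogonal_def
    by (smt (verit, ccfv_SIG) imageE lessThan_iff subsetD)
  have "0 \<notin> \<nu> ` L"
    using assms unfolding orthn_def by fastforce
  then show ?thesis using pairwise_orthogonal_independent po inj by blast
qed

lemma range_sub: "subspace (range (\<lambda>x. (U::real^'n^'n) *v x))"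
  unfolding subspace_def
proof (intro conjI ballI allI)
  show "0 \<in> range (\<lambda>x. U *v x)" by (metis matrix_vector_mult_0_right rangeI)
  fix x y assume "x \<in> range (\<lambda>x. U *v x)" "y \<in> range (\<lambda>x. U *v x)"
  then obtain a b where "x = U *v a" "y = U *v b" by auto
  then have "x + y = U *v (a + b)" by (simp add: matrix_vector_right_distrib)
  then show "x + y \<in> range (\<lambda>x. U *v x)" by blast
next
  fix c x assume "x \<in> range (\<lambda>x. U *v x)"
  then obtain a where "x = U *v a" by auto
  then have "c *\<^sub>R x = U *v (c *\<^sub>R a)" by (simp add: matrix_vector_mult_scaleR)
  then show "c *\<^sub>R x \<in> range (\<lambda>x. U *v x)" by blast
qed

lemma perp_dim:
  fixes S :: "(real^'n) set"
  assumes "subspace S"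
  shows "dim {y. \<forall>x\<in>S. orthogonal x y} + dim S = CARD('n)"
  using dim_subspace_orthogonal_to_vectors[OF assms subspace_UNIV] by simp



lemma ev_low:
  fixes \<nu> :: "nat \<Rightarrow> real^'n" and M U :: "real^'n^'n"
  assumes on: "orthn \<nu>" and evec: "\<forall>k<CARD('n). M *v \<nu> k = ev k *\<^sub>R \<nu> k"
    and mono: "\<forall>k l. k \<le> l \<longrightarrow> l < CARD('n) \<longrightarrow> ev l \<le> ev k"
    and U: "is_orth_proj U" and rk: "rank U = K" and small: "norm (M - U) < 1/2"
    and K1: "1 \<le> K"
  shows "ev (K - 1) > 1/2"
proof (rule ccontr)
  assume neg: "\<not> ev (K - 1) > 1/2"
  have Kn: "K \<le> CARD('n)" using rank_bound[of U] rk by simp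
  define S where "S = span (\<nu> ` {..<K-1})"
  have dS: "dim S \<le> K - 1"
    unfolding S_def using dim_le_card[of "span (\<nu> ` {..<K-1})" "\<nu> ` {..<K-1}"]
    by (metis card_image_le card_lessThan dim_span finite_imageI finite_lessThan le_trans span_superset subset_refl dim_subset)
  have sS: "subspace S" unfolding S_def by simp
  define W where "W = range (\<lambda>x. U *v x)"
  have dW: "dim W = K" unfolding W_def using rank_dim_range[of U] rk by simp
  have sW: "subspace W" unfolding W_def by (rule range_sub)
  define Sp where "Sp = {y. \<forall>x\<in>S. orthogonal x y}"
  have sSp: "subspace Sp" unfolding Sp_def by (rule subspace_orthogonal_to_vectors)
  have dSp: "dim Sp + dim S = CARD('n)" unfolding Sp_def by (rule perp_dim[OF sS])
  have "dim W + dim Sp > CARD('n)" using dS dW dSp K1 by linarith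
  then obtain x where x: "x \<in> W" "x \<in> Sp" "x \<noteq> 0" using common_vec[OF sW sSp] by auto
  have Ux: "U *v x = x" using x(1) proj_UU[OF U] unfolding W_def by auto
  have c0: "x \<bullet> \<nu> k = 0" if "k < K - 1" for k
  proof -
    have "\<nu> k \<in> S" unfolding S_def using that by (simp add: span_base)
    then have "\<nu> k \<bullet> x = 0" using x(2) unfolding Sp_def orthogonal_def by auto
    then show ?thesis by (simp add: inner_commute)
  qed
  have "x \<bullet> (M *v x) = (\<Sum>k<CARD('n). ev k * (x \<bullet> \<nu> k)\<^sup>2)"
    by (rule quad_form[OF on evec])
  also have "\<dots> \<le> (\<Sum>k<CARD('n). (1/2) * (x \<bullet> \<nu> k)\<^sup>2)"
  proof (rule sum_mono)
    fix k assume k: "k \<in> {..<CARD('n)}"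
    show "ev k * (x \<bullet> \<nu> k)\<^sup>2 \<le> (1/2) * (x \<bullet> \<nu> k)\<^sup>2"
    proof (cases "k < K - 1")
      case True then show ?thesis using c0 by simp
    next
      case False
      then have "ev k \<le> ev (K - 1)" using mono k by auto
      then have "ev k \<le> 1/2" using neg by linarith
      then show ?thesis by (rule mult_right_mono) simp
    qed
  qed
  also have "\<dots> = (1/2) * (norm x)\<^sup>2"
    by (simp add: orthn_norm2[OF on] sum_distrib_left)
  finally have up: "x \<bullet> (M *v x) \<le> (1/2) * (norm x)\<^sup>2" .
  have "M *v x = U *v x + (M - U) *v x" by (simp add: matrix_vector_mult_diff_rdistrib)
  then have "x \<bullet> (M *v x) = (norm x)\<^sup>2 + x \<bullet> ((M - U) *v x)"
    using Ux by (simp add: inner_add_right power2_norm_eq_inner)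
  moreover have "\<bar>x \<bullet> ((M - U) *v x)\<bar> \<le> norm (M - U) * (norm x)\<^sup>2" by (rule quad_E)
  ultimately have "(1 - norm (M - U)) * (norm x)\<^sup>2 \<le> (1/2) * (norm x)\<^sup>2"
    using up by (simp add: algebra_simps)
  moreover have "(norm x)\<^sup>2 > 0" using x(3) by simp
  ultimately have "1 - norm (M - U) \<le> 1/2" by (simp add: mult_le_cancel_right)
  then show False using small by linarith
qed

lemma ev_high:
  fixes \<nu> :: "nat \<Rightarrow> real^'n" and M U :: "real^'n^'n"
  assumes on: "orthn \<nu>" and evec: "\<forall>k<CARD('n). M *v \<nu> k = ev k *\<^sub>R \<nu> k"
    and mono: "\<forall>k l. k \<le> l \<longrightarrow> l < CARD('n) \<longrightarrow> ev l \<le> ev k"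
    and U: "is_orth_proj U" and rk: "rank U = K" and small: "norm (M - U) < 1/2"
    and Kn: "K < CARD('n)"
  shows "ev K < 1/2"
proof (rule ccontr)
  assume neg: "\<not> ev K < 1/2"
  define T where "T = span (\<nu> ` {..K})"
  have "independent (\<nu> ` {..K}) \<and> inj_on \<nu> {..K}"
    by (rule orthn_indep[OF on]) (use Kn in auto)
  then have dT: "dim T = K + 1"
    unfolding T_def by (simp add: dim_span dim_eq_card_independent card_image)
  have sT: "subspace T" unfolding T_def by simp
  define W where "W = range (\<lambda>x. U *v x)"
  have dW: "dim W = K" unfolding W_def using rank_dim_range[of U] rk by simp
  have sW: "subspace W" unfolding W_def by (rule range_sub)
  define Wp where "Wp = {y. \<forall>x\<in>W. orthogonal x y}"
  have sWp: "subspace Wp" unfolding Wp_def by (rule subspace_orthogonal_to_vectors)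
  have dWp: "dim Wp + dim W = CARD('n)" unfolding Wp_def by (rule perp_dim[OF sW])
  have "dim T + dim Wp > CARD('n)" using dT dW dWp by linarith
  then obtain x where x: "x \<in> T" "x \<in> Wp" "x \<noteq> 0" using common_vec[OF sT sWp] by auto
  have "orthogonal (U *v x) x" using x(2) unfolding Wp_def W_def by auto
  then have "(U *v x) \<bullet> x = 0" by (simp add: orthogonal_def)
  then have "(U *v x) \<bullet> (U *v x) = 0" using proj_sym[OF U, of x "U *v x"] proj_UU[OF U, of x]
    by (simp add: inner_commute)
  then have Ux: "U *v x = 0" by simp
  have c0: "x \<bullet> \<nu> k = 0" if "K < k" "k < CARD('n)" for k
  proof -
    have "orthogonal (\<nu> k) y" if "y \<in> \<nu> ` {..K}" for y
      using that on \<open>K < k\<close> \<open>k < CARD('n)\<close> Kn unfolding orthn_def orthogonal_def by auto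
    then have "orthogonal (\<nu> k) x" using orthogonal_to_span x(1) unfolding T_def by blast
    then show ?thesis by (simp add: orthogonal_def inner_commute)
  qed
  have "(1/2) * (norm x)\<^sup>2 = (\<Sum>k<CARD('n). (1/2) * (x \<bullet> \<nu> k)\<^sup>2)"
    by (simp add: orthn_norm2[OF on] sum_distrib_left)
  also have "\<dots> \<le> (\<Sum>k<CARD('n). ev k * (x \<bullet> \<nu> k)\<^sup>2)"
  proof (rule sum_mono)
    fix k assume k: "k \<in> {..<CARD('n)}"
    show "(1/2) * (x \<bullet> \<nu> k)\<^sup>2 \<le> ev k * (x \<bullet> \<nu> k)\<^sup>2"
    proof (cases "K < k")
      case True then show ?thesis using c0 k by simp
    next
      case False
      then have "k \<le> K" by simp
      then have "ev K \<le> ev k" using mono Kn by blast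
      then have "1/2 \<le> ev k" using neg by linarith
      then show ?thesis by (rule mult_right_mono) simp
    qed
  qed
  also have "\<dots> = x \<bullet> (M *v x)"
    by (rule quad_form[OF on evec, symmetric])
  finally have lo: "(1/2) * (norm x)\<^sup>2 \<le> x \<bullet> (M *v x)" .
  have "M *v x = U *v x + (M - U) *v x" by (simp add: matrix_vector_mult_diff_rdistrib)
  then have "x \<bullet> (M *v x) = x \<bullet> ((M - U) *v x)"
    using Ux by simp
  moreover have "\<bar>x \<bullet> ((M - U) *v x)\<bar> \<le> norm (M - U) * (norm x)\<^sup>2" by (rule quad_E)
  ultimately have "(1/2) * (norm x)\<^sup>2 \<le> norm (M - U) * (norm x)\<^sup>2"
    using lo by linarith
  moreover have "(norm x)\<^sup>2 > 0" using x(3) by simp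
  ultimately have "1/2 \<le> norm (M - U)" by (simp add: mult_le_cancel_right)
  then show False using small by linarith
qed



lemma P_action:
  fixes \<nu> :: "nat \<Rightarrow> real^'n"
  assumes on: "orthn \<nu>" and Kn: "K \<le> CARD('n)" and l: "l < CARD('n)"
  shows "(\<Sum>k<K. outer (\<nu> k) (\<nu> k)) *v \<nu> l = (if l < K then \<nu> l else 0)"
proof -
  have "(\<Sum>k<K. outer (\<nu> k) (\<nu> k)) *v \<nu> l = (\<Sum>k<K. (\<nu> k \<bullet> \<nu> l) *\<^sub>R \<nu> k)"
    by (simp add: sum_mv outer_mv)
  also have "\<dots> = (\<Sum>k<K. if k = l then \<nu> l else 0)"
    by (rule sum.cong) (use on Kn l in \<open>auto simp: orthn_def\<close>)
  also have "\<dots> = (if l < K then \<nu> l else 0)" by simp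
  finally show ?thesis .
qed

lemma P_norm:
  fixes \<nu> :: "nat \<Rightarrow> real^'n"
  assumes on: "orthn \<nu>" and Kn: "K \<le> CARD('n)"
  shows "norm (\<Sum>k<K. outer (\<nu> k) (\<nu> k)) = sqrt K"
proof -
  have n1: "norm (\<nu> l) = 1" if "l < CARD('n)" for l
    using on that unfolding orthn_def by (simp add: norm_eq_sqrt_inner)
  have "(norm (\<Sum>k<K. outer (\<nu> k) (\<nu> k)))\<^sup>2 = (\<Sum>l<CARD('n). (norm ((\<Sum>k<K. outer (\<nu> k) (\<nu> k)) *v \<nu> l))\<^sup>2)"
    by (rule orthn_frob[OF on])
  also have "\<dots> = (\<Sum>l<CARD('n). if l < K then 1 else 0)"
    by (rule sum.cong) (auto simp: P_action[OF on Kn] n1)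
  also have "\<dots> = card ({..<CARD('n)} \<inter> {l. l < K})"
    by (simp add: sum.If_cases)
  also have "{..<CARD('n)} \<inter> {l. l < K} = {..<K}" using Kn by auto
  finally have "(norm (\<Sum>k<K. outer (\<nu> k) (\<nu> k)))\<^sup>2 = K" by simp
  then show ?thesis by (metis norm_ge_zero real_sqrt_unique)
qed

lemma perturb:
  fixes U M P :: "real^'n^'n"
  assumes U: "is_orth_proj U" and rk: "rank U = K" and T: "top_eig_proj K M P"
  shows "norm (P - U) \<le> (2 + 2 * (sqrt K + norm U)) * norm (M - U)"
proof -
  obtain \<nu> ev where evec: "\<forall>k<CARD('n). M *v \<nu> k = ev k *\<^sub>R \<nu> k"
    and on: "orthn \<nu>"
    and mono: "\<forall>k l. k \<le> l \<longrightarrow> l < CARD('n) \<longrightarrow> ev l \<le> ev k"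
    and P: "P = (\<Sum>k<K. outer (\<nu> k) (\<nu> k))"
    using T unfolding top_eig_proj_def orthn_def by blast
  have Kn: "K \<le> CARD('n)" using rank_bound[of U] rk by simp
  have nP: "norm P = sqrt K" using P_norm[OF on Kn] P by simp
  define \<epsilon> where "\<epsilon> = norm (M - U)"
  have e0: "\<epsilon> \<ge> 0" unfolding \<epsilon>_def by simp
  have c0: "0 \<le> sqrt K + norm U" by simp
  show ?thesis
  proof (cases "\<epsilon> < 1/2")
    case False
    have "norm (P - U) \<le> norm P + norm U" by (rule norm_triangle_ineq4)
    also have "\<dots> = sqrt K + norm U" using nP by simp
    also have "\<dots> \<le> 2 * (sqrt K + norm U) * \<epsilon>"
    proof -
      have "1 \<le> 2 * \<epsilon>" using False by linarith
      then have "(sqrt K + norm U) * 1 \<le> (sqrt K + norm U) * (2 * \<epsilon>)"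
        by (rule mult_left_mono[OF _ c0])
      then show ?thesis by (simp add: mult_ac)
    qed
    also have "\<dots> \<le> (2 + 2 * (sqrt K + norm U)) * \<epsilon>"
      using e0 by (simp add: mult_right_mono)
    finally show ?thesis unfolding \<epsilon>_def .
  next
    case True
    let ?E = "M - U"
    have bound: "norm ((P - U) *v \<nu> k) \<le> 2 * norm (?E *v \<nu> k)" if k: "k < CARD('n)" for k
    proof -
      have Mv: "M *v \<nu> k = U *v \<nu> k + ?E *v \<nu> k" by (simp add: matrix_vector_mult_diff_rdistrib)
      have Pv: "P *v \<nu> k = (if k < K then \<nu> k else 0)" using P_action[OF on Kn k] P by simp
      show ?thesis
      proof (cases "k < K")
        case True
        have "ev (K - 1) > 1/2"
          by (rule ev_low[OF on evec mono U rk]) (use True \<open>\<epsilon> < 1/2\<close> \<epsilon>_def in auto)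
        moreover have "ev k \<ge> ev (K - 1)" using mono True Kn by auto
        ultimately have evk: "ev k > 1/2" by linarith
        have "ev k *\<^sub>R (\<nu> k - U *v \<nu> k) = M *v \<nu> k - U *v (M *v \<nu> k)"
          using evec k by (simp add: algebra_simps matrix_vector_mult_scaleR)
        also have "\<dots> = ?E *v \<nu> k - U *v (?E *v \<nu> k)"
          unfolding Mv by (simp add: matrix_vector_right_distrib proj_UU[OF U])
        finally have "ev k * norm (\<nu> k - U *v \<nu> k) = norm (?E *v \<nu> k - U *v (?E *v \<nu> k))"
          using evk by (metis norm_scaleR abs_of_pos less_trans zero_less_divide_1_iff zero_less_numeral)
        also have "\<dots> \<le> norm (?E *v \<nu> k)" by (rule proj_le2[OF U])
        finally have a: "ev k * norm (\<nu> k - U *v \<nu> k) \<le> norm (?E *v \<nu> k)" .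
        have "(1/2) * norm (\<nu> k - U *v \<nu> k) \<le> ev k * norm (\<nu> k - U *v \<nu> k)"
          by (rule mult_right_mono) (use evk in auto)
        with a have "norm (\<nu> k - U *v \<nu> k) \<le> 2 * norm (?E *v \<nu> k)" by linarith
        then show ?thesis using Pv True by (simp add: matrix_vector_mult_diff_rdistrib)
      next
        case False
        then have KL: "K < CARD('n)" using k by linarith
        have "ev K < 1/2"
          by (rule ev_high[OF on evec mono U rk]) (use KL \<open>\<epsilon> < 1/2\<close> \<epsilon>_def in auto)
        moreover have "ev k \<le> ev K" using mono False k by auto
        ultimately have evk: "1 - ev k > 1/2" by linarith
        have "(1 - ev k) *\<^sub>R (U *v \<nu> k) = U *v \<nu> k - U *v (M *v \<nu> k)"
          using evec k by (simp add: algebra_simps matrix_vector_mult_scaleR)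
        also have "\<dots> = - (U *v (?E *v \<nu> k))"
          unfolding Mv by (simp add: matrix_vector_right_distrib proj_UU[OF U])
        finally have "(1 - ev k) * norm (U *v \<nu> k) = norm (U *v (?E *v \<nu> k))"
          using evk by (metis norm_scaleR norm_minus_cancel abs_of_pos less_trans zero_less_divide_1_iff zero_less_numeral)
        also have "\<dots> \<le> norm (?E *v \<nu> k)" by (rule proj_le1[OF U])
        finally have a: "(1 - ev k) * norm (U *v \<nu> k) \<le> norm (?E *v \<nu> k)" .
        have "(1/2) * norm (U *v \<nu> k) \<le> (1 - ev k) * norm (U *v \<nu> k)"
          by (rule mult_right_mono) (use evk in auto)
        with a have "norm (U *v \<nu> k) \<le> 2 * norm (?E *v \<nu> k)" by linarith
        then show ?thesis using Pv False by (simp add: matrix_vector_mult_diff_rdistrib)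
      qed
    qed
    have "(norm (P - U))\<^sup>2 = (\<Sum>k<CARD('n). (norm ((P - U) *v \<nu> k))\<^sup>2)"
      by (rule orthn_frob[OF on])
    also have "\<dots> \<le> (\<Sum>k<CARD('n). (2 * norm (?E *v \<nu> k))\<^sup>2)"
    proof (rule sum_mono)
      fix k assume "k \<in> {..<CARD('n)}"
      then show "(norm ((P - U) *v \<nu> k))\<^sup>2 \<le> (2 * norm (?E *v \<nu> k))\<^sup>2"
        using bound by (intro power_mono) auto
    qed
    also have "\<dots> = 4 * (\<Sum>k<CARD('n). (norm (?E *v \<nu> k))\<^sup>2)"
      by (simp add: power_mult_distrib sum_distrib_left)
    also have "\<dots> = (2 * \<epsilon>)\<^sup>2"
      unfolding \<epsilon>_def using orthn_frob[OF on, of ?E] by (simp add: power_mult_distrib)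
    finally have "norm (P - U) \<le> 2 * \<epsilon>"
      by (rule power2_le_imp_le) (use e0 in simp)
    also have "\<dots> \<le> (2 + 2 * (sqrt K + norm U)) * \<epsilon>"
      using e0 c0 by (simp add: mult_right_mono)
    finally show ?thesis unfolding \<epsilon>_def .
  qed
qed



lemma tep_norm:
  fixes M P :: "real^'n^'n"
  assumes "top_eig_proj K M P" "K \<le> CARD('n)"
  shows "norm P = sqrt K"
proof -
  obtain \<nu> ev where on: "orthn \<nu>" and P: "P = (\<Sum>k<K. outer (\<nu> k) (\<nu> k))"
    using assms(1) unfolding top_eig_proj_def orthn_def by blast
  show ?thesis using P_norm[OF on assms(2)] P by simp
qed

theorem lemmaA1:
  fixes J :: nat and K :: "nat \<Rightarrow> nat" and U :: "nat \<Rightarrow> real^'n^'n"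
  assumes "J \<ge> 1"
    and "\<forall>j\<in>{1..J}. is_orth_proj (U j) \<and> rank (U j) = K j"
  shows "\<exists>C>0. \<forall>(\<alpha>::real) (Uh :: nat \<Rightarrow> real^'n^'n) (Ubar :: nat \<Rightarrow> real^'n^'n).
           0 \<le> \<alpha> \<and> \<alpha> < 1 / (4 * sqrt 2 + 2)
           \<and> (\<forall>j\<in>{1..J}. is_orth_proj (Uh j) \<and> rank (Uh j) = K j)
           \<and> is_fixed_point J K \<alpha> Uh Ubar
           \<longrightarrow> (\<Sum>j=1..J. frob (Ubar j - U j)) \<le> C * ((\<Sum>j=1..J. frob (Uh j - U j)) + \<alpha>)"
proof -
  define c where "c j = 2 + 2 * (sqrt (K j) + norm (U j))" for j
  define Ct where "Ct = (\<Sum>j=1..J. c j)"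
  define KB where "KB = (\<Sum>j=1..J. sqrt (K j))"
  define C where "C = Ct * (1 + 2 * J * KB) + 1"
  have c0: "c j \<ge> 0" for j unfolding c_def by simp
  have Ct0: "Ct \<ge> 0" unfolding Ct_def using c0 by (simp add: sum_nonneg)
  have KB0: "KB \<ge> 0" unfolding KB_def by (simp add: sum_nonneg)
  have cle: "c j \<le> Ct" if "j \<in> {1..J}" for j
    unfolding Ct_def using that c0 by (intro member_le_sum) auto
  have kle: "sqrt (K j) \<le> KB" if "j \<in> {1..J}" for j
    unfolding KB_def using that by (intro member_le_sum) auto
  have "0 \<le> Ct * (1 + 2 * J * KB)" using Ct0 KB0 by simp
  then have "C > 0" unfolding C_def by linarith
  moreover have "(\<Sum>j=1..J. frob (Ubar j - U j)) \<le> C * ((\<Sum>j=1..J. frob (Uh j - U j)) + \<alpha>)"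
    if a0: "0 \<le> \<alpha>" and fp: "is_fixed_point J K \<alpha> Uh Ubar" for \<alpha> Uh Ubar
  proof -
    have tep: "top_eig_proj (K j) (G_arg J \<alpha> Uh Ubar j) (Ubar j)" if "j \<in> {1..J}" for j
      using fp that unfolding is_fixed_point_def by blast
    have nUbar: "norm (Ubar i) \<le> KB" if "i \<in> {1..J}" for i
    proof -
      have "K i \<le> CARD('n)" using assms(2) that rank_bound[of "U i"] by auto
      then have "norm (Ubar i) = sqrt (K i)" using tep_norm[OF tep[OF that]] by simp
      then show ?thesis using kle[OF that] by simp
    qed
    define d where "d j = frob (Uh j - U j)" for j
    have d0: "d j \<ge> 0" for j unfolding d_def frob_norm by simp
    have each: "frob (Ubar j - U j) \<le> Ct * (d j + 2 * \<alpha> * KB)" if j: "j \<in> {1..J}" for j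
    proof -
      have "frob (Ubar j - U j) \<le> c j * norm (G_arg J \<alpha> Uh Ubar j - U j)"
        unfolding frob_norm c_def using perturb[of "U j" "K j" _ "Ubar j"] assms(2) j tep[OF j] by blast
      also have "norm (G_arg J \<alpha> Uh Ubar j - U j) \<le> d j + 2 * \<alpha> * KB"
      proof -
        define a where "a = (if 1 < j then \<alpha> *\<^sub>R Ubar (j - 1) else 0)"
        define b where "b = (if j < J then \<alpha> *\<^sub>R Ubar (j + 1) else 0)"
        have na: "norm a \<le> \<alpha> * KB"
        proof (cases "1 < j")
          case True
          have "norm (Ubar (j - 1)) \<le> KB" by (rule nUbar) (use True j in auto)
          then have "\<alpha> * norm (Ubar (j - 1)) \<le> \<alpha> * KB" by (rule mult_left_mono) (rule a0)
          then show ?thesis unfolding a_def using True a0 by simp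
        qed (use a0 KB0 a_def in simp)
        have nb: "norm b \<le> \<alpha> * KB"
        proof (cases "j < J")
          case True
          have "norm (Ubar (j + 1)) \<le> KB" by (rule nUbar) (use True j in auto)
          then have "\<alpha> * norm (Ubar (j + 1)) \<le> \<alpha> * KB" by (rule mult_left_mono) (rule a0)
          then show ?thesis unfolding b_def using True a0 by simp
        qed (use a0 KB0 b_def in simp)
        have "G_arg J \<alpha> Uh Ubar j - U j = a + (Uh j - U j) + b"
          unfolding G_arg_def a_def b_def by simp
        then have "norm (G_arg J \<alpha> Uh Ubar j - U j) \<le> norm a + norm (Uh j - U j) + norm b"
          unfolding \<open>G_arg J \<alpha> Uh Ubar j - U j = a + (Uh j - U j) + b\<close> using norm_triangle_ineq[of "a + (Uh j - U j)" b] norm_triangle_ineq[of a "Uh j - U j"] by linarith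
        then show ?thesis using na nb unfolding d_def frob_norm by linarith
      qed
      then have "c j * norm (G_arg J \<alpha> Uh Ubar j - U j) \<le> c j * (d j + 2 * \<alpha> * KB)"
        by (rule mult_left_mono) (rule c0)
      also have "\<dots> \<le> Ct * (d j + 2 * \<alpha> * KB)"
        by (rule mult_right_mono[OF cle[OF j]]) (use d0 a0 KB0 in simp)
      finally show ?thesis by simp
    qed
    have "(\<Sum>j=1..J. frob (Ubar j - U j)) \<le> (\<Sum>j=1..J. Ct * (d j + 2 * \<alpha> * KB))"
      by (rule sum_mono) (rule each)
    also have "\<dots> = Ct * ((\<Sum>j=1..J. d j) + 2 * J * \<alpha> * KB)"
    proof -
      have "(\<Sum>j=1..J. Ct * (d j + 2 * \<alpha> * KB)) = Ct * (\<Sum>j=1..J. d j + 2 * \<alpha> * KB)"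
        by (simp add: sum_distrib_left)
      also have "(\<Sum>j=1..J. d j + 2 * \<alpha> * KB) = (\<Sum>j=1..J. d j) + real J * (2 * \<alpha> * KB)"
        by (simp add: sum.distrib)
      finally show ?thesis by (simp add: mult_ac)
    qed
    also have "\<dots> \<le> Ct * ((1 + 2 * J * KB) * ((\<Sum>j=1..J. d j) + \<alpha>))"
    proof (rule mult_left_mono[OF _ Ct0])
      have D0: "(\<Sum>j=1..J. d j) \<ge> 0" using d0 by (simp add: sum_nonneg)
      have "0 \<le> 2 * J * KB * (\<Sum>j=1..J. d j)" using D0 KB0 by simp
      moreover have "0 \<le> \<alpha>" by (rule a0)
      ultimately show "(\<Sum>j=1..J. d j) + 2 * J * \<alpha> * KB \<le> (1 + 2 * J * KB) * ((\<Sum>j=1..J. d j) + \<alpha>)"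
        by (simp add: algebra_simps)
    qed
    also have "\<dots> \<le> C * ((\<Sum>j=1..J. d j) + \<alpha>)"
    proof -
      have "0 \<le> (\<Sum>j=1..J. d j) + \<alpha>" using d0 a0 by (simp add: sum_nonneg)
      then show ?thesis unfolding C_def by (simp add: algebra_simps)
    qed
    finally show ?thesis unfolding d_def .
  qed
  ultimately show ?thesis by blast
qed


end
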